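(* Fix $\mu\in\mathbb{C}$. Two rational functions $r_1(z),r_2(z)\in\mathbb{C}(z)^\times$ yield isomorphic $\mathfrak{sl}(2)$-modules $(\mathbb{C}(z),\rho^{(\mu)}_{r_1})\cong(\mathbb{C}(z),\rho^{(\mu)}_{r_2})$ if and only if there exist $\alpha_1,\dots,\alpha_n\in\mathbb{C}$ and $a_1,\dots,a_n\in\mathbb{Z}$ such that $$\frac{r_2(z)}{r_1(z)}=\prod_{i=1}^n\frac{z-\alpha_i}{z+a_i-\alpha_i}.$$
   Context: $\mathfrak{sl}(2)$ has basis $L_{-1}=f$, $L_0=-\tfrac12 h$, $L_1=-e$ for a Chevalley basis $e,f,h$ ($[e,f]=h$, $[h,e]=2e$, $[h,f]=-2f$). Let $\nabla$ be the $\mathbb{C}$-linear automorphism of $\mathbb{C}(z)$ given by $\nabla(g)(z)=g(z+1)$, and $\pi_\mu(z)=z(z-1)-\mu$. For $r(z)\in\mathbb{C}(z)^\times$, $\rho^{(\mu)}_r$ is the $\mathfrak{sl}(2)$-representation on the one-dimensional $\mathbb{C}(z)$-vector space $\mathbb{C}(z)$ given by $\rho^{(\mu)}_r(L_{-1})=\frac{\pi_\mu(z)}{r(z-1)}\circ\nabla^{-1}$, $\rho^{(\mu)}_r(L_0)=$ multiplication by $z$, $\rho^{(\mu)}_r(L_1)=r(z)\circ\nabla$ (a Casimir module of level $\mu$). *)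

theory Defs
  imports "HOL-Computational_Algebra.Computational_Algebra"
          "HOL-Computational_Algebra.Polynomial_Factorial"
          "HOL-Computational_Algebra.Normalized_Fraction"
          "HOL-Computational_Algebra.Field_as_Ring"
begin

type_synonym ratfun = "complex poly fract"

definition rf_poly :: "complex poly \<Rightarrow> ratfun" where
  "rf_poly p = Fract p 1"

definition rf_const :: "complex \<Rightarrow> ratfun" where
  "rf_const c = rf_poly [:c:]"

definition rf_z :: ratfun where
  "rf_z = rf_poly [:0, 1:]"

definition rf_shift :: "complex \<Rightarrow> ratfun \<Rightarrow> ratfun" where
  "rf_shift t g = (case quot_of_fract g of (p, q) \<Rightarrow>
      Fract (pcompose p [:t, 1:]) (pcompose q [:t, 1:]))"

definition nabla :: "ratfun \<Rightarrow> ratfun" where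
  "nabla = rf_shift 1"

definition nabla_inv :: "ratfun \<Rightarrow> ratfun" where
  "nabla_inv = rf_shift (-1)"

definition pi_mu :: "complex \<Rightarrow> ratfun" where
  "pi_mu \<mu> = rf_z * (rf_z - 1) - rf_const \<mu>"

datatype sl2_basis = Lm1 | L0 | L1

fun casimir_rep :: "complex \<Rightarrow> ratfun \<Rightarrow> sl2_basis \<Rightarrow> ratfun \<Rightarrow> ratfun" where
  "casimir_rep \<mu> r Lm1 g = (pi_mu \<mu> / nabla_inv r) * nabla_inv g"
| "casimir_rep \<mu> r L0 g = rf_z * g"
| "casimir_rep \<mu> r L1 g = r * nabla g"

text \<open>Isomorphism of sl(2)-modules: a C-linear bijection intertwining the action
  of the basis (hence of all of sl(2), by linearity).\<close>
definition sl2_iso :: "(sl2_basis \<Rightarrow> ratfun \<Rightarrow> ratfun) \<Rightarrow> (sl2_basis \<Rightarrow> ratfun \<Rightarrow> ratfun) \<Rightarrow> (ratfun \<Rightarrow> ratfun) \<Rightarrow> bool" where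
  "sl2_iso \<rho>1 \<rho>2 \<phi> \<longleftrightarrow>
     bij \<phi>
     \<and> (\<forall>f g. \<phi> (f + g) = \<phi> f + \<phi> g)
     \<and> (\<forall>c f. \<phi> (rf_const c * f) = rf_const c * \<phi> f)
     \<and> (\<forall>x f. \<phi> (\<rho>1 x f) = \<rho>2 x (\<phi> f))"

definition sl2_isomorphic :: "(sl2_basis \<Rightarrow> ratfun \<Rightarrow> ratfun) \<Rightarrow> (sl2_basis \<Rightarrow> ratfun \<Rightarrow> ratfun) \<Rightarrow> bool" where
  "sl2_isomorphic \<rho>1 \<rho>2 \<longleftrightarrow> (\<exists>\<phi>. sl2_iso \<rho>1 \<rho>2 \<phi>)"

end

theory Submission
  imports Defs
begin


lemma shift_poly_nz: "q \<noteq> 0 \<Longrightarrow> pcompose q [:t, 1:] \<noteq> (0::complex poly)"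
  using pcompose_eq_0[of q "[:t,1:]"] by auto

lemma rf_shift_Fract:
  assumes "q \<noteq> 0"
  shows "rf_shift t (Fract p q) = Fract (pcompose p [:t,1:]) (pcompose q [:t,1:])"
proof -
  obtain p' q' where pq: "quot_of_fract (Fract p q) = (p', q')" by (cases "quot_of_fract (Fract p q)")
  have q': "q' \<noteq> 0" using snd_quot_of_fract_nonzero[of "Fract p q"] pq by simp
  have "Fract p' q' = Fract p q" using Fract_quot_of_fract[of "Fract p q"] pq by simp
  hence e: "p' * q = p * q'" using eq_fract(1)[OF q' assms] by simp
  have "pcompose p' [:t,1:] * pcompose q [:t,1:] = pcompose p [:t,1:] * pcompose q' [:t,1:]"
    by (metis e pcompose_mult)
  thus ?thesis unfolding rf_shift_def pq using eq_fract(1)[OF shift_poly_nz[OF q'] shift_poly_nz[OF assms]]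
    by simp
qed

lemma rf_shift_mult: "rf_shift t (x * y) = rf_shift t x * rf_shift t y"
  by (cases x, cases y) (simp add: rf_shift_Fract pcompose_mult)

lemma rf_shift_add: "rf_shift t (x + y) = rf_shift t x + rf_shift t y"
  by (cases x, cases y) (simp add: rf_shift_Fract pcompose_mult pcompose_add shift_poly_nz)

lemma rf_shift_one: "rf_shift t 1 = 1"
  by (simp add: One_fract_def rf_shift_Fract pcompose_1)

lemma rf_shift_zero: "rf_shift t 0 = 0"
  by (simp add: Zero_fract_def rf_shift_Fract eq_fract(3))

lemma rf_shift_comp: "rf_shift t (rf_shift u x) = rf_shift (t + u) x"
proof (cases x)
  case (Fract a b)
  have e: "pcompose [:u, 1:] [:t, 1:] = [:t+u, 1:]" by (simp add: pcompose_pCons algebra_simps)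
  show ?thesis using Fract
    by (simp add: rf_shift_Fract shift_poly_nz pcompose_assoc[symmetric] e)
qed

lemma rf_shift_0: "rf_shift 0 x = x"
  by (cases x) (simp add: rf_shift_Fract)

lemma rf_shift_inverse: "rf_shift t (inverse x) = inverse (rf_shift t x)"
proof (cases x)
  case (Fract a b)
  show ?thesis
  proof (cases "a = 0")
    case True thus ?thesis using Fract by (simp add: rf_shift_Fract eq_fract(2,3) Zero_fract_def[symmetric] rf_shift_zero)
  next
    case False thus ?thesis using Fract by (simp add: rf_shift_Fract)
  qed
qed

lemma rf_shift_divide: "rf_shift t (x / y) = rf_shift t x / rf_shift t y"
  by (simp add: divide_inverse rf_shift_mult rf_shift_inverse)

lemma rf_shift_nz: "x \<noteq> 0 \<Longrightarrow> rf_shift t x \<noteq> 0"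
  by (metis rf_shift_comp rf_shift_0 rf_shift_zero add.commute add.right_inverse)

lemma rf_shift_poly: "rf_shift t (rf_poly p) = rf_poly (pcompose p [:t,1:])"
  by (simp add: rf_poly_def rf_shift_Fract pcompose_1)

lemma nabla_inv_nabla: "nabla_inv (nabla x) = x"
  by (simp add: nabla_def nabla_inv_def rf_shift_comp rf_shift_0)

lemma rf_poly_add: "rf_poly (p + q) = rf_poly p + rf_poly q"
  by (simp add: rf_poly_def)
lemma rf_poly_mult: "rf_poly (p * q) = rf_poly p * rf_poly q"
  by (simp add: rf_poly_def)
lemma rf_poly_diff: "rf_poly (p - q) = rf_poly p - rf_poly q"
  by (simp add: rf_poly_def)
lemma rf_poly_minus: "rf_poly (- q) = - rf_poly q"
  by (simp add: rf_poly_def)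
lemma rf_poly_eq_0: "rf_poly p = 0 \<longleftrightarrow> p = 0"
  by (simp add: rf_poly_def Zero_fract_def eq_fract)
lemma rf_poly_1: "rf_poly 1 = 1"
  by (simp add: rf_poly_def One_fract_def)

lemma rf_const_add: "rf_const (a + b) = rf_const a + rf_const b"
  by (simp add: rf_const_def rf_poly_def)
lemma rf_const_diff: "rf_const (a - b) = rf_const a - rf_const b"
  by (simp add: rf_const_def rf_poly_def)
lemma rf_const_minus: "rf_const (- b) = - rf_const b"
  by (simp add: rf_const_def rf_poly_def)
lemma rf_const_1: "rf_const 1 = 1"
  by (simp add: rf_const_def rf_poly_def One_fract_def one_pCons)
lemma rf_const_0: "rf_const 0 = 0"
  by (simp add: rf_const_def rf_poly_def Zero_fract_def)

lemma nabla_z: "nabla rf_z = rf_z + 1"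
proof -
  have "nabla rf_z = rf_poly [:1,1:]" unfolding nabla_def rf_z_def rf_shift_poly by (simp add: pcompose_pCons)
  also have "\<dots> = rf_poly [:0,1:] + rf_poly 1" unfolding rf_poly_add[symmetric] by (simp add: one_pCons)
  finally show ?thesis by (simp add: rf_z_def rf_poly_1)
qed
lemma nabla_const: "nabla (rf_const c) = rf_const c"
  by (simp add: nabla_def rf_const_def rf_shift_poly)



definition fac :: "complex \<Rightarrow> int \<Rightarrow> ratfun" where
  "fac \<alpha> a = (rf_z - rf_const \<alpha>) / (rf_z + rf_const (of_int a) - rf_const \<alpha>)"

lemma lin1: "rf_z - rf_const c = rf_poly [:-c,1:]"
  unfolding rf_z_def rf_const_def rf_poly_diff[symmetric] by simp
lemma lin2: "rf_z + rf_const a - rf_const c = rf_poly [:a-c,1:]"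
  unfolding rf_z_def rf_const_def rf_poly_diff[symmetric] rf_poly_add[symmetric] by simp

lemma fac_poly: "fac \<alpha> a = rf_poly [:-\<alpha>,1:] / rf_poly [:of_int a - \<alpha>,1:]"
  by (simp add: fac_def lin1 lin2)

lemma lin_nz: "rf_poly [:c,1:] \<noteq> 0"
  by (simp add: rf_poly_eq_0)

inductive_set S :: "ratfun set" where
  S1: "1 \<in> S"
| Sf: "x \<in> S \<Longrightarrow> x * fac \<alpha> a \<in> S"

lemma S_iff: "(\<exists>(n::nat) (\<alpha>::nat \<Rightarrow> complex) (a::nat \<Rightarrow> int). x = (\<Prod>i<n. fac (\<alpha> i) (a i))) \<longleftrightarrow> x \<in> S"
proof
  assume "\<exists>(n::nat) (\<alpha>::nat \<Rightarrow> complex) (a::nat \<Rightarrow> int). x = (\<Prod>i<n. fac (\<alpha> i) (a i))"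
  then obtain n :: nat and \<alpha> :: "nat \<Rightarrow> complex" and a :: "nat \<Rightarrow> int" where x: "x = (\<Prod>i<n. fac (\<alpha> i) (a i))" by blast
  have "(\<Prod>i<n. fac (\<alpha> i) (a i)) \<in> S" for n
    by (induction n) (auto intro: S.intros)
  thus "x \<in> S" using x by simp
next
  assume "x \<in> S"
  thus "\<exists>(n::nat) (\<alpha>::nat \<Rightarrow> complex) (a::nat \<Rightarrow> int). x = (\<Prod>i<n. fac (\<alpha> i) (a i))"
  proof induction
    case S1
    show ?case by (rule exI[of _ 0]) simp
  next
    case (Sf x \<beta> b)
    then obtain n :: nat and \<alpha> :: "nat \<Rightarrow> complex" and a :: "nat \<Rightarrow> int" where x: "x = (\<Prod>i<n. fac (\<alpha> i) (a i))" by blast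
    have "x * fac \<beta> b = (\<Prod>i<Suc n. fac ((\<alpha>(n:=\<beta>)) i) ((a(n:=b)) i))"
      unfolding x by simp
    thus ?case by blast
  qed
qed

lemma S_mult: "y \<in> S \<Longrightarrow> x \<in> S \<Longrightarrow> x * y \<in> S"
proof (induction y rule: S.induct)
  case S1 thus ?case by simp
next
  case (Sf y \<alpha> a) thus ?case using S.Sf[of "x*y" \<alpha> a] by (simp add: mult.assoc)
qed

lemma fac_inverse: "inverse (fac \<alpha> a) = fac (\<alpha> - of_int a) (- a)"
  by (simp add: fac_poly)

lemma S_inverse: "x \<in> S \<Longrightarrow> inverse x \<in> S"
proof (induction x rule: S.induct)
  case S1 thus ?case by (simp add: S.S1)
next
  case (Sf y \<alpha> a) thus ?case using S.Sf[of "inverse y" "\<alpha> - of_int a" "-a"]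
    by (simp add: fac_inverse)
qed

lemma S_fac: "fac \<alpha> a \<in> S"
  using S.Sf[OF S.S1] by simp

lemma nabla_poly: "nabla (rf_poly p) = rf_poly (pcompose p [:1,1:])"
  by (simp add: nabla_def rf_shift_poly)

lemma S_poly: "p \<noteq> 0 \<Longrightarrow> rf_poly p / nabla (rf_poly p) \<in> S"
proof (induction "degree p" arbitrary: p rule: less_induct)
  case less
  show ?case
  proof (cases "degree p = 0")
    case True
    then obtain c where "p = [:c:]" using degree_0_id by metis
    hence "nabla (rf_poly p) = rf_poly p" by (simp add: nabla_poly)
    moreover have "rf_poly p \<noteq> 0" using less.prems by (simp add: rf_poly_eq_0)
    ultimately show ?thesis by (simp add: S.S1)
  next
    case False
    have "\<not> constant (poly p)" using constant_degree[of p] False by simp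
    then obtain \<beta> where "poly p \<beta> = 0"
      using fundamental_theorem_of_algebra[of p] by blast
    then obtain q where pq: "p = [:-\<beta>,1:] * q" using poly_eq_0_iff_dvd by (metis dvdE)
    have q0: "q \<noteq> 0" using less.prems pq by auto
    have "degree p = degree ([:-\<beta>,1:] * q)" by (simp only: pq)
    also have "\<dots> = 1 + degree q" using q0 by (subst degree_mult_eq) auto
    finally have "degree p = 1 + degree q" .
    hence IH: "rf_poly q / nabla (rf_poly q) \<in> S" using less.hyps[of q] q0 by simp
    have e: "pcompose [:-\<beta>,1:] [:1,1:] = [:1 - \<beta>, 1:]" by (simp add: pcompose_pCons)
    have "rf_poly p / nabla (rf_poly p) = (rf_poly q / nabla (rf_poly q)) * fac \<beta> 1"
      unfolding pq nabla_poly unfolding pcompose_mult rf_poly_mult e fac_poly by (simp add: mult.commute)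
    thus ?thesis using IH S_fac S.Sf by metis
  qed
qed

definition T :: "ratfun set" where "T = {x. \<exists>h. h \<noteq> 0 \<and> x = h / nabla h}"

lemma nabla_mult: "nabla (x * y) = nabla x * nabla y"
  by (simp add: nabla_def rf_shift_mult)
lemma nabla_divide: "nabla (x / y) = nabla x / nabla y"
  by (simp add: nabla_def rf_shift_divide)
lemma nabla_inverse: "nabla (inverse x) = inverse (nabla x)"
  by (simp add: nabla_def rf_shift_inverse)
lemma nabla_one: "nabla 1 = 1"
  by (simp add: nabla_def rf_shift_one)
lemma nabla_nz: "x \<noteq> 0 \<Longrightarrow> nabla x \<noteq> 0"
  by (simp add: nabla_def rf_shift_nz)

lemma T_S: "x \<in> T \<Longrightarrow> x \<in> S"
proof -
  assume "x \<in> T"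
  then obtain h where h: "h \<noteq> 0" "x = h / nabla h" unfolding T_def by blast
  obtain p q where hpq: "h = Fract p q" "q \<noteq> 0" by (cases h)
  have p0: "p \<noteq> 0" using h hpq by (auto simp: Zero_fract_def eq_fract)
  have "h = rf_poly p / rf_poly q" using hpq by (simp add: rf_poly_def)
  hence "x = (rf_poly p / nabla (rf_poly p)) * inverse (rf_poly q / nabla (rf_poly q))"
    using h by (simp add: nabla_divide field_simps)
  thus "x \<in> S" using S_mult[OF S_inverse[OF S_poly[OF hpq(2)]] S_poly[OF p0]] by simp
qed

lemma T1: "1 \<in> T" unfolding T_def by (auto intro!: exI[of _ 1] simp: nabla_one)

lemma T_mult: "x \<in> T \<Longrightarrow> y \<in> T \<Longrightarrow> x * y \<in> T"
  unfolding T_def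
proof clarify
  fix h k :: ratfun assume "h \<noteq> 0" "k \<noteq> 0"
  thus "\<exists>g. g \<noteq> 0 \<and> h / nabla h * (k / nabla k) = g / nabla g"
    by (intro exI[of _ "h*k"]) (simp add: nabla_mult)
qed

lemma T_inverse: "x \<in> T \<Longrightarrow> inverse x \<in> T"
  unfolding T_def
proof clarify
  fix h :: ratfun assume "h \<noteq> 0"
  thus "\<exists>g. g \<noteq> 0 \<and> inverse (h / nabla h) = g / nabla g"
    by (intro exI[of _ "inverse h"]) (simp add: nabla_inverse divide_inverse mult.commute)
qed

lemma T_fac1: "fac \<alpha> 1 \<in> T"
proof -
  have "nabla (rf_poly [:-\<alpha>,1:]) = rf_poly [:1-\<alpha>,1:]" by (simp add: nabla_poly pcompose_pCons)
  thus ?thesis unfolding T_def fac_poly using lin_nz[of "-\<alpha>"]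
    by (intro CollectI exI[of _ "rf_poly [:-\<alpha>,1:]"]) simp
qed

lemma T_fac_nat: "fac \<alpha> (int n) \<in> T"
proof (induction n arbitrary: \<alpha>)
  case 0
  have "fac \<alpha> 0 = 1" using lin_nz[of "-\<alpha>"] by (simp add: fac_poly)
  thus ?case using T1 by simp
next
  case (Suc n)
  have "fac \<alpha> (int (Suc n)) = fac \<alpha> 1 * fac (\<alpha> - 1) (int n)"
    using lin_nz[of "1-\<alpha>"] by (simp add: fac_poly algebra_simps)
  thus ?case using T_mult T_fac1 Suc by metis
qed

lemma T_fac: "fac \<alpha> a \<in> T"
proof (cases "a \<ge> 0")
  case True thus ?thesis using T_fac_nat[of \<alpha> "nat a"] by simp
next
  case False
  then obtain n where n: "a = - int n" by (intro that[of "nat (-a)"]) simp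
  have "fac \<alpha> a = inverse (fac (\<alpha> + of_nat n) (int n))"
    unfolding fac_inverse n by simp
  thus ?thesis using T_inverse[OF T_fac_nat[of "\<alpha> + of_nat n" n]] by simp
qed

lemma S_T: "x \<in> S \<Longrightarrow> x \<in> T"
  by (induction x rule: S.induct) (auto intro: T1 T_mult T_fac)



lemma rf_poly_pCons: "rf_poly (pCons c p) = rf_const c + rf_z * rf_poly p"
proof -
  have "pCons c p = [:c:] + [:0,1:] * p" by (simp add: pcompose_pCons)
  thus ?thesis unfolding rf_const_def rf_z_def by (simp only: rf_poly_add rf_poly_mult)
qed

lemma nabla_inv_mult: "nabla_inv (x * y) = nabla_inv x * nabla_inv y"
  by (simp add: nabla_inv_def rf_shift_mult)

lemma aux1: "(b::'a::field) \<noteq> 0 \<Longrightarrow> c \<noteq> 0 \<Longrightarrow> c*h = b*k \<Longrightarrow> p/b*f*h = p/c*(f*k)"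
proof -
  assume b: "b \<noteq> 0" and c: "c \<noteq> 0" and e: "c*h = b*k"
  have "p/b*f*h = p*f*(c*h)/(b*c)" using b c by (simp add: field_simps)
  also have "\<dots> = p*f*(b*k)/(b*c)" by (simp only: e)
  also have "\<dots> = p/c*(f*k)" using b c by (simp add: field_simps)
  finally show ?thesis .
qed

lemma aux2: "(r2::'a::comm_ring) * nh = r1 * h \<Longrightarrow> r1 * nf * h = r2 * (nf * nh)"
  by (metis mult.commute mult.left_commute)

lemma aux3: "(q::'a::field) \<noteq> 0 \<Longrightarrow> q*x = y \<Longrightarrow> x = y/q"
  by (simp add: field_simps)
lemma aux4: "r1 * h = r2 * nh \<Longrightarrow> (r1::'a::field) \<noteq> 0 \<Longrightarrow> nh \<noteq> 0 \<Longrightarrow> r2 / r1 = h / nh"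
  by (simp add: field_simps)
lemma aux5: "(r1::'a::field) \<noteq> 0 \<Longrightarrow> nh \<noteq> 0 \<Longrightarrow> r2 / r1 = h / nh \<Longrightarrow> r2 * nh = r1 * h"
  by (simp add: field_simps)

lemma iso_forward:
  assumes iso: "sl2_iso (casimir_rep \<mu> r1) (casimir_rep \<mu> r2) \<phi>" and r1: "r1 \<noteq> 0"
  shows "r2 / r1 \<in> T"
proof -
  have b: "bij \<phi>" and add: "\<And>f g. \<phi> (f + g) = \<phi> f + \<phi> g"
    and cm: "\<And>c f. \<phi> (rf_const c * f) = rf_const c * \<phi> f"
    and rep: "\<And>x f. \<phi> (casimir_rep \<mu> r1 x f) = casimir_rep \<mu> r2 x (\<phi> f)"
    using iso unfolding sl2_iso_def by auto
  have z: "\<phi> (rf_z * f) = rf_z * \<phi> f" for f using rep[of L0 f] by simp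
  have phi0: "\<phi> 0 = 0" using add[of 0 0] by (metis add.right_neutral add_left_cancel)
  have pm: "\<phi> (rf_poly p * f) = rf_poly p * \<phi> f" for p f
  proof (induction p arbitrary: f)
    case 0 thus ?case by (simp add: rf_poly_eq_0[of 0, simplified] phi0)
  next
    case (pCons c p f)
    have "\<phi> (rf_poly (pCons c p) * f) = \<phi> (rf_const c * f + rf_z * (rf_poly p * f))"
      by (simp add: rf_poly_pCons algebra_simps)
    also have "\<dots> = rf_const c * \<phi> f + rf_z * (rf_poly p * \<phi> f)"
      by (simp add: add cm z pCons.IH)
    also have "\<dots> = rf_poly (pCons c p) * \<phi> f" by (simp add: rf_poly_pCons algebra_simps)
    finally show ?case .
  qed
  define h where "h = \<phi> 1"
  have gen: "\<phi> f = f * h" for f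
  proof (cases f)
    case (Fract p q)
    have q0: "rf_poly q \<noteq> 0" using Fract by (simp add: rf_poly_eq_0)
    have fe: "f = rf_poly p / rf_poly q" using Fract by (simp add: rf_poly_def)
    have "rf_poly q * \<phi> f = \<phi> (rf_poly q * f)" by (simp add: pm)
    also have "\<dots> = \<phi> (rf_poly p * 1)" using fe q0 by simp
    also have "\<dots> = rf_poly p * h" unfolding h_def by (rule pm)
    finally have "rf_poly q * \<phi> f = rf_poly p * h" .
    hence "\<phi> f = rf_poly p * h / rf_poly q" by (rule aux3[OF q0])
    thus ?thesis using fe by simp
  qed
  have h0: "h \<noteq> 0"
  proof
    assume "h = 0"
    hence "\<phi> 1 = \<phi> 0" using phi0 h_def by simp
    hence "(1::ratfun) = 0" by (rule injD[OF bij_is_inj[OF b]])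
    thus False by simp
  qed
  have "\<phi> (r1 * nabla 1) = r2 * nabla (\<phi> 1)" using rep[of L1 1] by simp
  hence "r1 * h = r2 * nabla h" by (simp add: gen nabla_one)
  hence "r2 / r1 = h / nabla h" using r1 nabla_nz[OF h0] by (rule aux4)
  thus ?thesis unfolding T_def using h0 by blast
qed

lemma iso_backward:
  assumes "r2 / r1 \<in> T" and r1: "r1 \<noteq> 0" and r2: "r2 \<noteq> 0"
  shows "sl2_isomorphic (casimir_rep \<mu> r1) (casimir_rep \<mu> r2)"
proof -
  obtain h where h0: "h \<noteq> 0" and hr: "r2 / r1 = h / nabla h" using assms(1) unfolding T_def by blast
  have nh: "nabla h \<noteq> 0" using nabla_nz[OF h0] .
  have key: "r2 * nabla h = r1 * h" using r1 nh hr by (rule aux5)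
  have key2: "nabla_inv r2 * h = nabla_inv r1 * nabla_inv h"
    using arg_cong[OF key, of nabla_inv] by (simp add: nabla_inv_mult nabla_inv_nabla)
  have n1: "nabla_inv r1 \<noteq> 0" using r1 by (simp add: nabla_inv_def rf_shift_nz)
  have n2: "nabla_inv r2 \<noteq> 0" using r2 by (simp add: nabla_inv_def rf_shift_nz)
  define \<phi> where "\<phi> = (\<lambda>f::ratfun. f * h)"
  have "bij \<phi>"
    by (rule o_bij[of "\<lambda>f. f / h"]) (auto simp: \<phi>_def h0 fun_eq_iff)
  moreover have rep: "\<phi> (casimir_rep \<mu> r1 x f) = casimir_rep \<mu> r2 x (\<phi> f)" for x f
  proof (cases x)
    case Lm1
    have "pi_mu \<mu> / nabla_inv r1 * nabla_inv f * h = pi_mu \<mu> / nabla_inv r2 * (nabla_inv f * nabla_inv h)"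
      by (rule aux1[OF n1 n2 key2])
    thus ?thesis using Lm1 by (simp add: \<phi>_def nabla_inv_mult)
  next
    case L0 thus ?thesis by (simp add: \<phi>_def mult.assoc)
  next
    case L1
    have "r1 * nabla f * h = r2 * (nabla f * nabla h)"
      by (rule aux2[OF key])
    thus ?thesis using L1 by (simp add: \<phi>_def nabla_mult)
  qed
  ultimately have "sl2_iso (casimir_rep \<mu> r1) (casimir_rep \<mu> r2) \<phi>"
    unfolding sl2_iso_def
  proof (intro conjI allI)
    show "bij \<phi>" by fact
  next
    fix f g show "\<phi> (f + g) = \<phi> f + \<phi> g" by (simp add: \<phi>_def distrib_right)
  next
    fix c f show "\<phi> (rf_const c * f) = rf_const c * \<phi> f" by (simp add: \<phi>_def mult.assoc)
  next
    fix x f show "\<phi> (casimir_rep \<mu> r1 x f) = casimir_rep \<mu> r2 x (\<phi> f)" by (rule rep)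
  qed
  thus ?thesis unfolding sl2_isomorphic_def by blast
qed

theorem theorem9p1:
  fixes \<mu> :: complex and r1 r2 :: ratfun
  assumes "r1 \<noteq> 0" and "r2 \<noteq> 0"
  shows "sl2_isomorphic (casimir_rep \<mu> r1) (casimir_rep \<mu> r2) \<longleftrightarrow>
    (\<exists>(n::nat) (\<alpha>::nat \<Rightarrow> complex) (a::nat \<Rightarrow> int).
       r2 / r1 = (\<Prod>i<n. (rf_z - rf_const (\<alpha> i)) / (rf_z + rf_const (of_int (a i)) - rf_const (\<alpha> i))))"
proof -
  have "(\<exists>(n::nat) (\<alpha>::nat \<Rightarrow> complex) (a::nat \<Rightarrow> int).
       r2 / r1 = (\<Prod>i<n. (rf_z - rf_const (\<alpha> i)) / (rf_z + rf_const (of_int (a i)) - rf_const (\<alpha> i))))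
    \<longleftrightarrow> r2 / r1 \<in> S"
    using S_iff[of "r2 / r1"] unfolding fac_def .
  also have "\<dots> \<longleftrightarrow> r2 / r1 \<in> T" using S_T T_S by blast
  also have "\<dots> \<longleftrightarrow> sl2_isomorphic (casimir_rep \<mu> r1) (casimir_rep \<mu> r2)"
    using iso_forward[OF _ assms(1)] iso_backward[OF _ assms] unfolding sl2_isomorphic_def by blast
  finally show ?thesis by blast
qed

end
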